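(* Let $p_0,p_1,\dots$ be a special sequence in $C([-1,1])$ and for $i\ge1$ let $g_i(t)=\int_0^t[1+p_i(s)]\,ds$ for $t\in[-1,1]$. If $R$ is a tournament on $[n]$ and $\varepsilon>0$, then there exists $(f_1,\dots,f_n)\in\mathcal G_0^n$ such that (1) $\|f_i-g_i\|<\varepsilon$ (sup norm) for $i\in[n]$; (2) for $i\in[n]$ and $t\in[-1,1]$, $1/3<f_i'(t)<3$; (3) for distinct $i,j\in[n]$, $f_j\circ f_i^{-1}\in\mathcal G_+$ if and only if $(i,j)\in R$.
   Context: $\mathcal G$ is the group of strictly increasing continuous maps $f:[-1,1]\to[-1,1]$ with $f(\pm1)=\pm1$; $\mathcal G_0=\{f\in\mathcal G:\int_{-1}^1f=0\}$, $\mathcal G_+=\{f\in\mathcal G:\int_{-1}^1f>0\}$. A tournament on $[n]$ is $R\subset[n]\times[n]$ with no diagonal pairs and exactly one of $(i,j),(j,i)$ for each distinct $i,j$. A special sequence is a sequence $p_0,p_1,\dots$ of nonzero continuously differentiable functions on $[-1,1]$ such that: every $p_i$ is even and $p_0=1$; $\int_{-1}^1p_i(t)p_j(t)\,dt=0$ for $i\ne j$; $\sup_t|p_i(t)|\le\tfrac12$ for $i>0$; and $p_i(\pm1)=0$ for $i>0$. *)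

theory Defs
  imports "HOL-Analysis.Analysis"
begin

text \<open>The group G of increasing homeomorphisms of [-1,1] fixing the endpoints
  (functions real => real, only their values on [-1,1] matter).\<close>
definition homG :: "(real \<Rightarrow> real) set" where
  "homG = {f. continuous_on {-1..1} f \<and> strict_mono_on {-1..1} f
              \<and> f ` {-1..1} \<subseteq> {-1..1} \<and> f (-1) = -1 \<and> f 1 = 1}"

definition homG0 :: "(real \<Rightarrow> real) set" where
  "homG0 = {f \<in> homG. integral {-1..1} f = 0}"

definition homGplus :: "(real \<Rightarrow> real) set" where
  "homGplus = {f \<in> homG. integral {-1..1} f > 0}"

definition tournament :: "nat \<Rightarrow> (nat \<times> nat) set \<Rightarrow> bool" where
  "tournament n R \<longleftrightarrow> R \<subseteq> {1..n} \<times> {1..n} \<and> (\<forall>i. (i, i) \<notin> R)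
     \<and> (\<forall>i\<in>{1..n}. \<forall>j\<in>{1..n}. i \<noteq> j \<longrightarrow> ((i, j) \<in> R \<longleftrightarrow> (j, i) \<notin> R))"

definition C1_on_interval :: "(real \<Rightarrow> real) \<Rightarrow> bool" where
  "C1_on_interval p \<longleftrightarrow> (\<exists>D. continuous_on {-1..1} D \<and>
      (\<forall>t\<in>{-1..1}. (p has_real_derivative D t) (at t within {-1..1})))"

definition special_sequence :: "(nat \<Rightarrow> real \<Rightarrow> real) \<Rightarrow> bool" where
  "special_sequence p \<longleftrightarrow>
     (\<forall>i. C1_on_interval (p i) \<and> (\<exists>t\<in>{-1..1}. p i t \<noteq> 0)
          \<and> (\<forall>t\<in>{-1..1}. p i (-t) = p i t))
   \<and> (\<forall>t\<in>{-1..1}. p 0 t = 1)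
   \<and> (\<forall>i j. i \<noteq> j \<longrightarrow> integral {-1..1} (\<lambda>t. p i t * p j t) = 0)
   \<and> (\<forall>i>0. (\<forall>t\<in>{-1..1}. \<bar>p i t\<bar> \<le> 1/2) \<and> p i (-1) = 0 \<and> p i 1 = 0)"

definition oint :: "(real \<Rightarrow> real) \<Rightarrow> real \<Rightarrow> real \<Rightarrow> real" where
  "oint h a b = (if a \<le> b then integral {a..b} h else - integral {b..a} h)"

end

theory Submission
  imports Defs
begin

lemma odd_int0:
  fixes \<phi> :: "real \<Rightarrow> real"
  assumes "continuous_on {-1..1} \<phi>" "\<And>t. t \<in> {-1..1} \<Longrightarrow> \<phi> (-t) = - \<phi> t"
  shows "integral {-1..1} \<phi> = 0"
proof -
  have "integral {-1..1} (\<lambda>x. \<phi> (-x)) = integral {-1..1} \<phi>"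
    using Henstock_Kurzweil_Integration.integral_reflect_real[of 1 "-1" \<phi>] by simp
  moreover have "integral {-1..1} (\<lambda>x. \<phi> (-x)) = integral {-1..1} (\<lambda>x. - \<phi> x)"
    by (rule integral_cong) (use assms in auto)
  ultimately show ?thesis by simp
qed

lemma Gprops:
  fixes q :: "real \<Rightarrow> real"
  assumes cq: "continuous_on {-1..1} q" and ev: "\<And>t. t \<in> {-1..1} \<Longrightarrow> q (-t) = q t"
    and tot: "integral {-1..1} q = 2"
    and G_def: "G = (\<lambda>t. integral {-1..t} q - 1)"
  shows "G (-1) = -1" "G 1 = 1" "\<And>t. t\<in>{-1..1} \<Longrightarrow> G (-t) = - G t"
    "\<And>t. t\<in>{-1..1} \<Longrightarrow> oint q 0 t = G t"
    "\<And>t. t\<in>{-1..1} \<Longrightarrow> (G has_real_derivative q t) (at t within {-1..1})"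
    "continuous_on {-1..1} G"
proof -
  have intg: "q integrable_on {a..b}" if "-1 \<le> a" "b \<le> 1" for a b
    by (rule integrable_continuous_interval, rule continuous_on_subset[OF cq]) (use that in auto)
  have refl: "integral {-1..-t} q = integral {t..1} q" if "t \<in> {-1..1}" for t
  proof -
    have "integral {-1..-t} (\<lambda>x. q (-x)) = integral {t..1} q"
      using Henstock_Kurzweil_Integration.integral_reflect_real[of t 1 q] by simp
    moreover have "integral {-1..-t} (\<lambda>x. q (-x)) = integral {-1..-t} q"
      by (rule integral_cong) (use ev that in auto)
    ultimately show ?thesis by simp
  qed
  have comb: "integral {-1..t} q + integral {t..1} q = 2" if "t \<in> {-1..1}" for t
    using Henstock_Kurzweil_Integration.integral_combine[of "-1" t 1 q] intg[of "-1" 1] that tot by auto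
  have half: "integral {-1..0} q = 1"
    using refl[of 0] comb[of 0] by simp
  show "G (-1) = -1" unfolding G_def by simp
  show "G 1 = 1" unfolding G_def using tot by simp
  show "G (-t) = - G t" if "t\<in>{-1..1}" for t
    unfolding G_def using refl[OF that] comb[OF that] by simp
  show "oint q 0 t = G t" if t: "t\<in>{-1..1}" for t
  proof (cases "0 \<le> t")
    case True
    then show ?thesis unfolding oint_def G_def
      using Henstock_Kurzweil_Integration.integral_combine[of "-1" 0 t q] intg[of "-1" t] t half by auto
  next
    case False
    then show ?thesis unfolding oint_def G_def
      using Henstock_Kurzweil_Integration.integral_combine[of "-1" t 0 q] intg[of "-1" 0] t half by auto
  qed
  show der: "(G has_real_derivative q t) (at t within {-1..1})" if "t\<in>{-1..1}" for t
  proof -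
    have "((\<lambda>x. integral {-1..x} q) has_real_derivative q t) (at t within {-1..1})"
      by (rule integral_has_real_derivative[OF cq that])
    then have "((\<lambda>x. integral {-1..x} q - 1) has_real_derivative q t - 0) (at t within {-1..1})"
      by (intro DERIV_diff DERIV_const)
    then show ?thesis unfolding G_def by simp
  qed
  show "continuous_on {-1..1} G"
    using der by (rule DERIV_continuous_on)
qed

lemma homG_image:
  assumes "f \<in> homG"
  shows "f ` {-1..1} = {-1..1}" "inj_on f {-1..1}"
proof -
  have c: "continuous_on {-1..1} f" and sm: "strict_mono_on {-1..1} f"
    and e: "f (-1) = -1" "f 1 = 1" and im: "f ` {-1..1} \<subseteq> {-1..1}"
    using assms unfolding homG_def by auto
  show "inj_on f {-1..1}" by (rule strict_mono_on_imp_inj_on[OF sm])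
  have "{-1..1} \<subseteq> f ` {-1..1}"
  proof
    fix y :: real assume "y \<in> {-1..1}"
    then obtain x where "-1 \<le> x" "x \<le> 1" "f x = y"
      using IVT'[of f "-1" y 1] c e by auto
    then show "y \<in> f ` {-1..1}" by auto
  qed
  then show "f ` {-1..1} = {-1..1}" using im by auto
qed

lemma homG_comp_inv:
  assumes f: "f \<in> homG" and g: "g \<in> homG"
  shows "g \<circ> inv_into {-1..1} f \<in> homG"
proof -
  let ?S = "{-1..1::real}"
  let ?\<phi> = "inv_into ?S f"
  have c: "continuous_on ?S f" and sm: "strict_mono_on ?S f"
    and e: "f (-1) = -1" "f 1 = 1"
    using f unfolding homG_def by auto
  have cg: "continuous_on ?S g" and smg: "strict_mono_on ?S g"
    and eg: "g (-1) = -1" "g 1 = 1" and img: "g ` ?S \<subseteq> ?S"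
    using g unfolding homG_def by auto
  have im: "f ` ?S = ?S" and inj: "inj_on f ?S" using homG_image[OF f] by auto
  have phiS: "?\<phi> y \<in> ?S" if "y \<in> ?S" for y
    using inv_into_into[of y f ?S] im that by auto
  have fphi: "f (?\<phi> y) = y" if "y \<in> ?S" for y
    using f_inv_into_f[of y f ?S] im that by auto
  have phif: "?\<phi> (f x) = x" if "x \<in> ?S" for x
    using inv_into_f_f[OF inj that] .
  have cphi: "continuous_on ?S ?\<phi>"
    using continuous_on_inv[OF c compact_Icc, of ?\<phi>] phif im by auto
  have smphi: "strict_mono_on ?S ?\<phi>"
  proof (rule strict_mono_onI)
    fix r s assume rs: "r \<in> ?S" "s \<in> ?S" "r < s"
    show "?\<phi> r < ?\<phi> s"
    proof (rule ccontr)
      assume "\<not> ?\<phi> r < ?\<phi> s"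
      then have "?\<phi> s \<le> ?\<phi> r" by simp
      then have "f (?\<phi> s) \<le> f (?\<phi> r)"
        using strict_mono_on_leD[OF sm phiS[OF rs(2)] phiS[OF rs(1)]] by simp
      then show False using fphi rs by simp
    qed
  qed
  have p1: "?\<phi> (-1) = -1" using phif[of "-1"] e by simp
  have p2: "?\<phi> 1 = 1" using phif[of 1] e by simp
  show ?thesis unfolding homG_def
  proof (intro CollectI conjI)
    show "continuous_on ?S (g \<circ> ?\<phi>)"
      by (rule continuous_on_compose[OF cphi continuous_on_subset[OF cg]]) (use phiS in auto)
    show "strict_mono_on ?S (g \<circ> ?\<phi>)"
      by (rule strict_mono_onI) (auto intro!: strict_mono_onD[OF smg] strict_mono_onD[OF smphi] phiS)
    show "(g \<circ> ?\<phi>) ` ?S \<subseteq> ?S" using img phiS by auto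
    show "(g \<circ> ?\<phi>) (-1) = -1" using p1 eg by simp
    show "(g \<circ> ?\<phi>) 1 = 1" using p2 eg by simp
  qed
qed

lemma deriv_smono:
  fixes f f' :: "real \<Rightarrow> real"
  assumes d: "\<And>t. t \<in> {-1..1} \<Longrightarrow> (f has_real_derivative f' t) (at t within {-1..1})"
    and b: "\<And>t. t \<in> {-1..1} \<Longrightarrow> f' t \<ge> c" and c: "c > 0"
  shows "strict_mono_on {-1..1} f"
proof (rule strict_mono_onI)
  fix x y :: real assume xy: "x \<in> {-1..1}" "y \<in> {-1..1}" "x < y"
  have I1: "(f' has_integral (f y - f x)) {x..y}"
  proof (rule fundamental_theorem_of_calculus)
    show "x \<le> y" using xy by simp
    fix t assume t: "t \<in> {x..y}"
    then have "t \<in> {-1..1}" using xy by auto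
    then have "(f has_real_derivative f' t) (at t within {x..y})"
      by (rule has_field_derivative_subset[OF d]) (use xy in auto)
    then show "(f has_vector_derivative f' t) (at t within {x..y})"
      by (simp add: has_real_derivative_iff_has_vector_derivative)
  qed
  have I2: "((\<lambda>_. c) has_integral ((y - x) * c)) {x..y}"
    using has_integral_const_real[of c x y] xy by simp
  have "(y - x) * c \<le> f y - f x"
    by (rule has_integral_le[OF I2 I1]) (use b xy in auto)
  moreover have "(y - x) * c > 0" using xy c by simp
  ultimately show "f x < f y" by simp
qed

theorem theorem7p2:
  fixes p :: "nat \<Rightarrow> real \<Rightarrow> real" and R :: "(nat \<times> nat) set" and n :: nat and \<epsilon> :: real
  assumes "special_sequence p"
    and "tournament n R"
    and "\<epsilon> > 0"
  shows "\<exists>f :: nat \<Rightarrow> real \<Rightarrow> real.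
           (\<forall>i\<in>{1..n}. f i \<in> homG0)
         \<and> (\<forall>i\<in>{1..n}. (SUP t\<in>{-1..1}. \<bar>f i t - oint (\<lambda>s. 1 + p i s) 0 t\<bar>) < \<epsilon>)
         \<and> (\<forall>i\<in>{1..n}. \<forall>t\<in>{-1..1}. \<exists>d. (f i has_real_derivative d) (at t within {-1..1})
                                          \<and> 1/3 < d \<and> d < 3)
         \<and> (\<forall>i\<in>{1..n}. \<forall>j\<in>{1..n}. i \<noteq> j \<longrightarrow>
               ((f j \<circ> inv_into {-1..1} (f i)) \<in> homGplus \<longleftrightarrow> (i, j) \<in> R))"
proof -
  let ?S = "{-1..1::real}"
  have sp: "special_sequence p" using assms(1) .
  have C1: "\<And>k. C1_on_interval (p k)" and nz: "\<And>k. \<exists>t\<in>?S. p k t \<noteq> 0"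
    and ev: "\<And>k t. t \<in> ?S \<Longrightarrow> p k (-t) = p k t" and p0: "\<And>t. t \<in> ?S \<Longrightarrow> p 0 t = 1"
    and orth: "\<And>i j. i \<noteq> j \<Longrightarrow> integral ?S (\<lambda>t. p i t * p j t) = 0"
    and pb: "\<And>i t. i > 0 \<Longrightarrow> t \<in> ?S \<Longrightarrow> \<bar>p i t\<bar> \<le> 1/2"
    and pe: "\<And>i. i > 0 \<Longrightarrow> p i (-1) = 0 \<and> p i 1 = 0"
    using sp unfolding special_sequence_def by auto
  obtain D where Dc: "\<And>k. continuous_on ?S (D k)"
    and Dd: "\<And>k t. t \<in> ?S \<Longrightarrow> (p k has_real_derivative D k t) (at t within ?S)"
    using C1 unfolding C1_on_interval_def by metis
  have cp: "continuous_on ?S (p k)" for k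
    using Dd by (rule DERIV_continuous_on)
  have intgS: "g integrable_on ?S" if "continuous_on ?S g" for g :: "real \<Rightarrow> real"
    using integrable_continuous_interval[OF that] .
  have intp: "integral ?S (p k) = 0" if "k > 0" for k
  proof -
    have "integral ?S (\<lambda>t. p k t * p 0 t) = 0" using orth that by simp
    moreover have "integral ?S (\<lambda>t. p k t * p 0 t) = integral ?S (p k)"
      by (rule integral_cong) (use p0 in auto)
    ultimately show ?thesis by simp
  qed
  define N where "N k = integral ?S (\<lambda>t. p k t * p k t)" for k
  have Npos: "N k > 0" for k
  proof -
    have c2: "continuous_on ?S (\<lambda>t. p k t * p k t)" by (intro continuous_intros cp)
    have "N k \<ge> 0" unfolding N_def by (rule integral_nonneg[OF intgS[OF c2]]) simp
    moreover have "N k \<noteq> 0"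
    proof
      assume "N k = 0"
      then have "\<forall>x\<in>?S. p k x * p k x = 0"
        using integral_eq_0_iff[OF c2, of] unfolding N_def by simp
      then show False using nz[of k] by auto
    qed
    ultimately show ?thesis by simp
  qed
  define s where "s a b = (if (a, b) \<in> R then 1 else -1::real)" for a b
  have santi: "s j i = - s i j" if "i \<in> {1..n}" "j \<in> {1..n}" "i \<noteq> j" for i j
  proof -
    have "(i, j) \<in> R \<longleftrightarrow> (j, i) \<notin> R" using assms(2) that unfolding tournament_def by blast
    then show ?thesis unfolding s_def by auto
  qed
  define c where "c i k = (if k = i then 0 else s k i / (2 * N k))" for i k
  define h where "h i t = (\<Sum>k\<in>{1..n}. c i k * p k t)" for i t
  define H where "H i t = (\<Sum>k\<in>{1..n}. c i k * D k t)" for i t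
  define q where "q i t = 1 + p i t" for i t
  define G where "G i = (\<lambda>t. integral {-1..t} (q i) - 1)" for i
  have qc: "continuous_on ?S (q i)" for i unfolding q_def by (intro continuous_intros cp)
  have qev: "\<And>t. t \<in> ?S \<Longrightarrow> q i (-t) = q i t" for i unfolding q_def using ev by simp
  have qtot: "integral ?S (q i) = 2" if "i > 0" for i
  proof -
    have "((\<lambda>t. 1 + p i t) has_integral (2 + 0)) ?S"
    proof (rule has_integral_add)
      show "((\<lambda>t. 1::real) has_integral 2) ?S" using has_integral_const_real[of "1::real" "-1" 1] by simp
      show "(p i has_integral 0) ?S" using integrable_integral[OF intgS[OF cp[of i]]] intp[OF that] by simp
    qed
    then show ?thesis unfolding q_def by (simp add: integral_unique)
  qed
  have Gp: "G i (-1) = -1" "G i 1 = 1" "\<And>t. t\<in>?S \<Longrightarrow> G i (-t) = - G i t"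
    "\<And>t. t\<in>?S \<Longrightarrow> oint (q i) 0 t = G i t"
    "\<And>t. t\<in>?S \<Longrightarrow> (G i has_real_derivative q i t) (at t within ?S)"
    "continuous_on ?S (G i)" if i0: "i > 0" for i
  proof -
    have gd: "G i = (\<lambda>t. integral {-1..t} (q i) - 1)" using G_def by simp
    have ev': "\<And>t. t \<in> ?S \<Longrightarrow> q i (-t) = q i t" by (rule qev)
    note X = Gprops[of "q i" "G i", OF qc ev' qtot[OF i0] gd]
    show "G i (-1) = -1" "G i 1 = 1" "\<And>t. t\<in>?S \<Longrightarrow> G i (-t) = - G i t"
      "\<And>t. t\<in>?S \<Longrightarrow> oint (q i) 0 t = G i t"
      "\<And>t. t\<in>?S \<Longrightarrow> (G i has_real_derivative q i t) (at t within ?S)"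
      "continuous_on ?S (G i)" using X by auto
  qed
  have Gc: "continuous_on ?S (G i)" if "i > 0" for i using Gp(6)[OF that] .
  have hc: "continuous_on ?S (h i)" for i unfolding h_def by (intro continuous_intros cp)
  have Hc: "continuous_on ?S (H i)" for i unfolding H_def by (intro continuous_intros Dc)
  have hder: "(h i has_real_derivative H i t) (at t within ?S)" if "t \<in> ?S" for i t
    unfolding h_def H_def by (intro DERIV_sum DERIV_cmult Dd that)
  have hend: "h i (-1) = 0" "h i 1 = 0" for i
    unfolding h_def using pe by auto
  have inthp: "((\<lambda>t. c i k * p k t) has_integral 0) ?S" if "k \<in> {1..n}" for i k
  proof -
    have "(p k has_integral 0) ?S" using integrable_integral[OF intgS[OF cp[of k]]] intp[of k] that by simp
    from has_integral_mult_right[OF this, of "c i k"] show ?thesis by simp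
  qed
  have inth: "(h i has_integral 0) ?S" for i
  proof -
    have "((\<lambda>t. \<Sum>k\<in>{1..n}. c i k * p k t) has_integral (\<Sum>k\<in>{1..n}. 0)) ?S"
      by (rule has_integral_sum) (auto intro: inthp)
    then show ?thesis unfolding h_def[abs_def] by simp
  qed
  have intqh: "((\<lambda>t. q j t * h i t) has_integral (c i j * N j)) ?S" if "j \<in> {1..n}" for i j
  proof -
    have e1: "((\<lambda>t. c i k * (p j t * p k t)) has_integral (if k = j then c i j * N j else 0)) ?S"
      if "k \<in> {1..n}" for k
    proof -
      have "((\<lambda>t. c i k * (p j t * p k t)) has_integral (c i k * integral ?S (\<lambda>t. p j t * p k t))) ?S"
        by (rule has_integral_mult_right[OF integrable_integral[OF intgS]]) (intro continuous_intros cp)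
      then show ?thesis using orth[of j k] unfolding N_def by (cases "k = j") auto
    qed
    have "((\<lambda>t. \<Sum>k\<in>{1..n}. c i k * (p j t * p k t)) has_integral (\<Sum>k\<in>{1..n}. (if k = j then c i j * N j else 0))) ?S"
      by (rule has_integral_sum, simp, rule e1, simp)
    then have a1: "((\<lambda>t. \<Sum>k\<in>{1..n}. c i k * (p j t * p k t)) has_integral (c i j * N j)) ?S"
      using that by simp
    have "((\<lambda>t. h i t + (\<Sum>k\<in>{1..n}. c i k * (p j t * p k t))) has_integral (0 + c i j * N j)) ?S"
      by (rule has_integral_add[OF inth a1])
    moreover have "h i t + (\<Sum>k\<in>{1..n}. c i k * (p j t * p k t)) = q j t * h i t" for t
      unfolding q_def h_def by (simp add: algebra_simps sum.distrib sum_distrib_left)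
    ultimately show ?thesis by simp
  qed
  have hcomb: "continuous_on ?S (\<lambda>t. \<Sum>i\<in>{1..n}. \<bar>h i t\<bar> + \<bar>H i t\<bar>)"
    by (intro continuous_intros hc Hc)
  obtain B0 where B0: "\<And>t. t \<in> ?S \<Longrightarrow> (\<Sum>i\<in>{1..n}. \<bar>h i t\<bar> + \<bar>H i t\<bar>) \<le> B0"
  proof -
    have "bounded ((\<lambda>t. \<Sum>i\<in>{1..n}. \<bar>h i t\<bar> + \<bar>H i t\<bar>) ` ?S)"
      by (rule compact_imp_bounded[OF compact_continuous_image[OF hcomb compact_Icc]])
    then obtain a where a: "\<forall>x\<in>(\<lambda>t. \<Sum>i\<in>{1..n}. \<bar>h i t\<bar> + \<bar>H i t\<bar>) ` ?S. norm x \<le> a"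
      unfolding bounded_iff by blast
    have "(\<Sum>i\<in>{1..n}. \<bar>h i t\<bar> + \<bar>H i t\<bar>) \<le> a" if "t \<in> ?S" for t
    proof -
      have "norm (\<Sum>i\<in>{1..n}. \<bar>h i t\<bar> + \<bar>H i t\<bar>) \<le> a" using a that by blast
      then show ?thesis by simp
    qed
    then show ?thesis using that by blast
  qed
  define B where "B = max 1 B0"
  have hB: "\<bar>h i t\<bar> \<le> B \<and> \<bar>H i t\<bar> \<le> B" if "i \<in> {1..n}" "t \<in> ?S" for i t
  proof -
    have "\<bar>h i t\<bar> + \<bar>H i t\<bar> \<le> (\<Sum>i\<in>{1..n}. \<bar>h i t\<bar> + \<bar>H i t\<bar>)"
      by (rule member_le_sum[of i "{1..n}" "\<lambda>i. \<bar>h i t\<bar> + \<bar>H i t\<bar>"]) (use that in auto)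
    then show ?thesis using B0[OF that(2)] unfolding B_def by auto
  qed
  have B1: "B \<ge> 1" unfolding B_def by simp
  define m where "m = min \<epsilon> 1"
  have m: "0 < m" "m \<le> \<epsilon>" "m \<le> 1" using assms(3) unfolding m_def by auto
  define \<delta> where "\<delta> = m / (12 * B * B)"
  have dpos: "\<delta> > 0" unfolding \<delta>_def using m B1 by simp
  have dBB: "\<delta> * B * B = m / 12" unfolding \<delta>_def using B1 by (simp add: field_simps)
  have "\<delta> * B \<le> \<delta> * B * B" using dpos B1 by simp
  then have dB: "\<delta> * B \<le> 1/12" and dBe: "\<delta> * B < \<epsilon>" using dBB m by auto
  have dBB2: "\<delta> * (2 * B * B) \<le> 1/6" using dBB m by (simp add: algebra_simps)
  define F where "F i = (\<lambda>t. G i t + \<delta> * h i t)" for i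
  have Fder: "(F i has_real_derivative (q i t + \<delta> * H i t)) (at t within ?S)"
    if "i > 0" "t \<in> ?S" for i t
    unfolding F_def by (intro DERIV_add DERIV_cmult Gp(5) hder that)
  have Fd: "1/3 < q i t + \<delta> * H i t \<and> q i t + \<delta> * H i t < 3"
    if "i \<in> {1..n}" "t \<in> ?S" for i t
  proof -
    have "\<bar>\<delta> * H i t\<bar> \<le> \<delta> * B"
      using hB[OF that] dpos by (simp add: abs_mult mult_left_mono)
    moreover have "\<bar>p i t\<bar> \<le> 1/2" using pb that by auto
    ultimately show ?thesis unfolding q_def using dB by (auto simp: abs_le_iff)
  qed
  have Fend: "F i (-1) = -1" "F i 1 = 1" if "i > 0" for i
    unfolding F_def using Gp(1,2)[OF that] hend by auto
  have Fc: "continuous_on ?S (F i)" if "i > 0" for i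
    using Fder[OF that] by (rule DERIV_continuous_on)
  have FG: "F i \<in> homG" if "i \<in> {1..n}" for i
  proof -
    have i0: "i > 0" using that by simp
    have sm: "strict_mono_on ?S (F i)"
    proof (rule deriv_smono[of "F i" "\<lambda>t. q i t + \<delta> * H i t" "1/3"])
      show "(F i has_real_derivative q i t + \<delta> * H i t) (at t within ?S)" if "t \<in> ?S" for t
        using Fder[OF i0 that] .
      show "1/3 \<le> q i t + \<delta> * H i t" if "t \<in> ?S" for t
        using Fd[OF \<open>i \<in> {1..n}\<close> that] by linarith
    qed simp
    have "F i t \<in> ?S" if "t \<in> ?S" for t
      using strict_mono_on_leD[OF sm, of "-1" t] strict_mono_on_leD[OF sm, of t 1] that Fend[OF i0] by auto
    then show ?thesis unfolding homG_def using Fc[OF i0] sm Fend[OF i0] by auto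
  qed
  have FG0: "F i \<in> homG0" if "i \<in> {1..n}" for i
  proof -
    have i0: "i > 0" using that by simp
    have "integral ?S (G i) = 0" by (rule odd_int0[OF Gc[OF i0] Gp(3)[OF i0]])
    then have g0: "(G i has_integral 0) ?S" using integrable_integral[OF intgS[OF Gc[OF i0]]] by simp
    have "((\<lambda>t. G i t + \<delta> * h i t) has_integral (0 + \<delta> * 0)) ?S"
      by (intro has_integral_add g0 has_integral_mult_right inth)
    then have "integral ?S (F i) = 0" unfolding F_def by (simp add: integral_unique)
    then show ?thesis unfolding homG0_def using FG[OF that] by simp
  qed
  have Fsup: "(SUP t\<in>?S. \<bar>F i t - oint (\<lambda>s. 1 + p i s) 0 t\<bar>) < \<epsilon>" if "i \<in> {1..n}" for i
  proof -
    have i0: "i > 0" using that by simp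
    have qe: "(\<lambda>s. 1 + p i s) = q i" unfolding q_def by (rule refl)
    have "\<bar>F i t - oint (\<lambda>s. 1 + p i s) 0 t\<bar> \<le> \<delta> * B" if "t \<in> ?S" for t
    proof -
      have "\<bar>F i t - oint (\<lambda>s. 1 + p i s) 0 t\<bar> = \<delta> * \<bar>h i t\<bar>"
        unfolding qe Gp(4)[OF i0 that] F_def using dpos by (simp add: abs_mult)
      also have "\<dots> \<le> \<delta> * B" using hB[OF \<open>i \<in> {1..n}\<close> that] dpos by (simp add: mult_left_mono)
      finally show ?thesis .
    qed
    then have "(SUP t\<in>?S. \<bar>F i t - oint (\<lambda>s. 1 + p i s) 0 t\<bar>) \<le> \<delta> * B"
      by (intro cSUP_least) auto
    then show ?thesis using dBe by linarith
  qed
  have Fpair: "(F j \<circ> inv_into ?S (F i) \<in> homGplus) \<longleftrightarrow> (i, j) \<in> R"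
    if ij: "i \<in> {1..n}" "j \<in> {1..n}" "i \<noteq> j" for i j
  proof -
    have i0: "i > 0" and j0: "j > 0" using ij by auto
    let ?\<phi> = "inv_into ?S (F i)"
    have comp: "F j \<circ> ?\<phi> \<in> homG" by (rule homG_comp_inv[OF FG[OF ij(1)] FG[OF ij(2)]])
    have imF: "F i ` ?S = ?S" and injF: "inj_on (F i) ?S" using homG_image[OF FG[OF ij(1)]] by auto
    have ccomp: "continuous_on ?S (F j \<circ> ?\<phi>)" using comp unfolding homG_def by simp
    have "((\<lambda>x. (q i x + \<delta> * H i x) *\<^sub>R (F j \<circ> ?\<phi>) (F i x)) has_integral
            integral {F i (-1)..F i 1} (F j \<circ> ?\<phi>)) ?S"
      by (rule has_integral_substitution[of "-1" 1 "F i" "-1" 1 "F j \<circ> ?\<phi>" "\<lambda>x. q i x + \<delta> * H i x"])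
         (use Fend[OF i0] imF ccomp Fder[OF i0] in auto)
    then have sub0: "((\<lambda>x. (q i x + \<delta> * H i x) *\<^sub>R (F j \<circ> ?\<phi>) (F i x)) has_integral
            integral ?S (F j \<circ> ?\<phi>)) ?S" using Fend[OF i0] by simp
    have sub: "((\<lambda>x. (q i x + \<delta> * H i x) * F j x) has_integral integral ?S (F j \<circ> ?\<phi>)) ?S"
      by (rule has_integral_eq[OF _ sub0]) (simp add: inv_into_f_f[OF injF])
    have T1: "((\<lambda>x. q i x * G j x) has_integral 0) ?S"
    proof -
      have cc: "continuous_on ?S (\<lambda>x. q i x * G j x)" by (intro continuous_intros qc Gp(6)[OF j0])
      have "integral ?S (\<lambda>x. q i x * G j x) = 0"
        by (rule odd_int0[OF cc]) (simp add: qev Gp(3)[OF j0])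
      then show ?thesis using integrable_integral[OF intgS[OF cc]] by simp
    qed
    have T2: "((\<lambda>x. q i x * h j x) has_integral (c j i * N i)) ?S" by (rule intqh[OF ij(1)])
    have T3: "((\<lambda>x. H i x * G j x) has_integral (- (c i j * N j))) ?S"
    proof -
      have "((\<lambda>t. q j t * h i t + H i t * G j t) has_integral (G j 1 * h i 1 - G j (-1) * h i (-1))) ?S"
      proof (rule fundamental_theorem_of_calculus)
        fix t assume t: "t \<in> ?S"
        have "((\<lambda>x. G j x * h i x) has_real_derivative (q j t * h i t + H i t * G j t)) (at t within ?S)"
          using DERIV_mult[OF Gp(5)[OF j0 t] hder[OF t]] by simp
        then show "((\<lambda>x. G j x * h i x) has_vector_derivative (q j t * h i t + H i t * G j t)) (at t within ?S)"
          by (simp add: has_real_derivative_iff_has_vector_derivative)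
      qed simp
      then have "((\<lambda>t. q j t * h i t + H i t * G j t) has_integral 0) ?S" using hend by simp
      from has_integral_diff[OF this intqh[OF ij(2), of i]]
      show ?thesis by simp
    qed
    define I4 where "I4 = integral ?S (\<lambda>x. H i x * h j x)"
    have T4: "((\<lambda>x. H i x * h j x) has_integral I4) ?S"
      unfolding I4_def by (rule integrable_integral[OF intgS]) (intro continuous_intros Hc hc)
    have bnd: "\<bar>H i x * h j x\<bar> \<le> B * B" if "x \<in> ?S" for x
    proof -
      have "\<bar>H i x\<bar> * \<bar>h j x\<bar> \<le> B * B"
        using hB[OF ij(1) that] hB[OF ij(2) that] by (intro mult_mono) auto
      then show ?thesis by (simp add: abs_mult)
    qed
    have cst: "((\<lambda>x. c0) has_integral (2 * c0)) ?S" for c0 :: real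
      using has_integral_const_real[of c0 "-1" 1] by simp
    have "I4 \<le> 2 * (B * B)"
      by (rule has_integral_le[OF T4 cst]) (use bnd in \<open>auto simp: abs_le_iff\<close>)
    moreover have "2 * (- (B * B)) \<le> I4"
    proof (rule has_integral_le[OF cst T4])
      fix x assume "x \<in> ?S"
      from bnd[OF this] show "- (B * B) \<le> H i x * h j x" by (simp add: abs_le_iff)
    qed
    ultimately have I4b: "\<bar>I4\<bar> \<le> 2 * B * B" by auto
    have "((\<lambda>x. q i x * G j x + \<delta> * (q i x * h j x) + \<delta> * (H i x * G j x) + (\<delta> * \<delta>) * (H i x * h j x))
       has_integral (0 + \<delta> * (c j i * N i) + \<delta> * (- (c i j * N j)) + (\<delta> * \<delta>) * I4)) ?S"
      by (intro has_integral_add has_integral_mult_right T1 T2 T3 T4)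
    then have "((\<lambda>x. (q i x + \<delta> * H i x) * F j x)
       has_integral (0 + \<delta> * (c j i * N i) + \<delta> * (- (c i j * N j)) + (\<delta> * \<delta>) * I4)) ?S"
      unfolding F_def by (rule has_integral_eq[rotated]) (simp add: algebra_simps)
    then have Ival: "integral ?S (F j \<circ> ?\<phi>) = \<delta> * (c j i * N i) - \<delta> * (c i j * N j) + (\<delta> * \<delta>) * I4"
      using has_integral_unique[OF sub] by simp
    have cji: "c j i * N i = s i j / 2" unfolding c_def using ij Npos[of i] by simp
    have cij: "c i j * N j = - s i j / 2" unfolding c_def using ij Npos[of j] santi[OF ij] by simp
    have small: "\<bar>(\<delta> * \<delta>) * I4\<bar> \<le> \<delta> / 6"
    proof -
      have "\<delta> * \<bar>I4\<bar> \<le> \<delta> * (2 * B * B)" using I4b dpos by (simp add: mult_left_mono)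
      then have "\<delta> * \<bar>I4\<bar> \<le> 1/6" using dBB2 by simp
      then have "\<delta> * (\<delta> * \<bar>I4\<bar>) \<le> \<delta> * (1/6)" using dpos by (simp add: mult_left_mono)
      then show ?thesis by (simp add: abs_mult)
    qed
    have IV: "integral ?S (F j \<circ> ?\<phi>) = \<delta> * s i j + (\<delta> * \<delta>) * I4"
      unfolding Ival cji cij by (simp add: algebra_simps)
    have sm1: "- (\<delta> / 6) \<le> (\<delta> * \<delta>) * I4" "(\<delta> * \<delta>) * I4 \<le> \<delta> / 6"
      using small by (simp_all add: abs_le_iff)
    have "integral ?S (F j \<circ> ?\<phi>) > 0 \<longleftrightarrow> (i, j) \<in> R"
    proof (cases "(i, j) \<in> R")
      case True
      then have "s i j = 1" unfolding s_def by simp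
      then show ?thesis using IV sm1 dpos True by simp
    next
      case False
      then have "s i j = -1" unfolding s_def by simp
      then show ?thesis using IV sm1 dpos False by simp
    qed
    then show ?thesis unfolding homGplus_def using comp by simp
  qed
  show ?thesis
  proof (intro exI[of _ F] conjI ballI impI)
    show "F i \<in> homG0" if "i \<in> {1..n}" for i using FG0[OF that] .
    show "(SUP t\<in>?S. \<bar>F i t - oint (\<lambda>s. 1 + p i s) 0 t\<bar>) < \<epsilon>" if "i \<in> {1..n}" for i
      using Fsup[OF that] .
    show "\<exists>d. (F i has_real_derivative d) (at t within ?S) \<and> 1/3 < d \<and> d < 3"
      if "i \<in> {1..n}" "t \<in> ?S" for i t
    proof -
      show ?thesis using Fd[OF that] Fder[of i t] that by auto
    qed
    show "(F j \<circ> inv_into ?S (F i) \<in> homGplus) = ((i, j) \<in> R)"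
      if "i \<in> {1..n}" "j \<in> {1..n}" "i \<noteq> j" for i j
      using Fpair[OF that] .
  qed
qed

end
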